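(* Let $A$ be an integral domain, $a,b\in A\setminus\{0\}$ relatively prime, and $s,t\in A$ relatively prime with $a=st$ (where $u,v$ relatively prime means $uA\cap vA=uvA$). Let $A[X]$ be a polynomial ring in one variable and $I=(aX-b)A[X]$. Then the following are equivalent: (a) $\bigcap_{i\ge0}(s^iA[X]+I)=I$; (b) $A\cap\bigcap_{i\ge0}(s^iA[X]+I)=0$. Moreover, $A\cap\bigcap_{i\ge0}(s^iA[X]+I)=W(b,s,t)$.
   Context: For elements $b,s,t$ of a ring $A$, define ideals $W_i,J_i$ ($i\ge0$) by $W_0=A$, $J_0=(W_0:t)=A$, and for $i\ge1$: $W_i=bJ_{i-1}+s^iA$ and $J_i=(W_i:t)$, where $(W:t)=\{x\in A: tx\in W\}$. Set $W(b,s,t)=\bigcap_{i\ge0}W_i$. *)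

theory Defs
  imports "HOL-Computational_Algebra.Polynomial"
begin

definition principal_ideal :: "'a::comm_ring_1 \<Rightarrow> 'a set" where
  "principal_ideal u = {u * x | x. True}"

definition rel_prime :: "'a::comm_ring_1 \<Rightarrow> 'a \<Rightarrow> bool" where
  "rel_prime u v \<longleftrightarrow> principal_ideal u \<inter> principal_ideal v = principal_ideal (u * v)"

definition colon :: "'a::comm_ring_1 set \<Rightarrow> 'a \<Rightarrow> 'a set" where
  "colon W t = {x. t * x \<in> W}"

fun Wseq :: "'a::comm_ring_1 \<Rightarrow> 'a \<Rightarrow> 'a \<Rightarrow> nat \<Rightarrow> 'a set" where
  "Wseq b s t 0 = UNIV"
| "Wseq b s t (Suc i) =
     {b * x + s ^ Suc i * y | x y. x \<in> colon (Wseq b s t i) t}"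

definition Jseq :: "'a::comm_ring_1 \<Rightarrow> 'a \<Rightarrow> 'a \<Rightarrow> nat \<Rightarrow> 'a set" where
  "Jseq b s t i = colon (Wseq b s t i) t"

definition Wbst :: "'a::comm_ring_1 \<Rightarrow> 'a \<Rightarrow> 'a \<Rightarrow> 'a set" where
  "Wbst b s t = (\<Inter>i. Wseq b s t i)"

definition lin_ideal :: "'a::comm_ring_1 \<Rightarrow> 'a \<Rightarrow> 'a poly set" where
  "lin_ideal a b = {[:- b, a:] * f | f. True}"

definition pow_plus_ideal :: "'a::comm_ring_1 \<Rightarrow> nat \<Rightarrow> 'a poly set \<Rightarrow> 'a poly set" where
  "pow_plus_ideal s i I = {smult (s ^ i) g + p | g p. p \<in> I}"

end

theory Submission
  imports Defs
begin

lemma smult_as: "smult k p = [:k:] * p" by simp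
lemma const_add: "[:x + y:] = [:x:] + [:y::'a::comm_ring_1:]" by simp
lemma const_mult: "[:x * y:] = [:x:] * [:y::'a::comm_ring_1:]" by simp
lemma const_minus: "[:- x:] = - [:x::'a::comm_ring_1:]" by simp
lemma const_pow: "[:x ^ n:] = [:x::'a::comm_ring_1:] ^ n" by (induct n) (auto simp: const_mult)
lemma Q_eq: "[:- b, a:] = [:a:] * [:0,1:] - [:b::'a::comm_ring_1:]" by simp
lemma pCons_X: "pCons c p = [:c:] + [:0,1:] * (p::'a::comm_ring_1 poly)" by simp

lemma all_dvd_smult:
  fixes R :: "'a::comm_ring_1 poly"
  shows "(\<forall>k. d dvd coeff R k) \<Longrightarrow> \<exists>R'. R = smult d R'"
proof (induction R rule: pCons_induct)
  case 0 then show ?case by (intro exI[of _ 0]) simp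
next
  case (pCons c p)
  have "\<forall>k. d dvd coeff p k" using pCons.prems by (metis coeff_pCons_Suc)
  then obtain p' where "p = smult d p'" using pCons.IH by blast
  moreover obtain c' where "c = d * c'" using pCons.prems by (metis coeff_pCons_0 dvdE)
  ultimately show ?case by (intro exI[of _ "pCons c' p'"]) simp
qed

lemma div_lemma:
  fixes d a b :: "'a::idom"
  assumes "d dvd a" "\<And>x. d dvd b * x \<Longrightarrow> d dvd x"
    and "smult d P = [:- b, a:] * R"
  shows "\<exists>R'. R = smult d R'"
proof (rule all_dvd_smult, intro allI)
  fix k
  have e: "[:- b, a:] * R = smult (-b) R + pCons 0 (smult a R)" by simp
  have "coeff ([:- b, a:] * R) k = d * coeff P k" using assms(3)[symmetric] by simp
  hence h: "d dvd (- b * coeff R k) + coeff (pCons 0 (smult a R)) k" unfolding e by simp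
  have "d dvd coeff (pCons 0 (smult a R)) k"
    using assms(1) by (cases k) auto
  hence "d dvd coeff (pCons 0 (smult a R)) k - ((- b * coeff R k) + coeff (pCons 0 (smult a R)) k)"
    using h by (rule dvd_diff)
  hence "d dvd b * coeff R k" by simp
  thus "d dvd coeff R k" using assms(2) by blast
qed

lemma const_eq_X: "[:k:] = [:0,1:] * p \<Longrightarrow> k = 0 \<and> p = (0::'a::comm_ring_1 poly)"
proof -
  assume h: "[:k:] = [:0,1:] * p"
  have "[:0,1:] * p = pCons 0 p" by simp
  hence "pCons k 0 = pCons 0 p" using h by simp
  thus ?thesis by simp
qed


lemma mem_ppi: "p \<in> pow_plus_ideal s i (lin_ideal a b) \<longleftrightarrow> (\<exists>g f. p = smult (s^i) g + [:-b,a:]*f)"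
  unfolding pow_plus_ideal_def lin_ideal_def by auto

lemma rp_dvd: "rel_prime a b \<Longrightarrow> a dvd y \<Longrightarrow> b dvd y \<Longrightarrow> a * b dvd y"
proof -
  assume r: "rel_prime a b" and "a dvd y" "b dvd y"
  hence "y \<in> principal_ideal a \<inter> principal_ideal b" unfolding principal_ideal_def by (auto elim!: dvdE)
  hence "y \<in> principal_ideal (a * b)" using r unfolding rel_prime_def by simp
  thus ?thesis unfolding principal_ideal_def by auto
qed

lemma cop_a:
  fixes a b :: "'a::idom"
  assumes "rel_prime a b" "b \<noteq> 0" "a dvd b * x" shows "a dvd x"
proof -
  have "a * b dvd b * x" using rp_dvd[OF assms(1) assms(3)] by simp
  thus ?thesis using assms(2) by (simp add: mult.commute)
qed

lemma cop_s:
  fixes a b s t :: "'a::idom"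
  assumes "rel_prime a b" "b \<noteq> 0" "a = s * t" "a \<noteq> 0" "s dvd b * x" shows "s dvd x"
proof -
  have "a dvd t * (b * x)" using assms(3,5) by (simp add: mult.commute)
  hence "a * b dvd t * (b * x)" using rp_dvd[OF assms(1)] by simp
  hence "(t * b) * s dvd (t * b) * x" using assms(3) by (simp add: ac_simps)
  moreover have "t * b \<noteq> 0" using assms by auto
  ultimately show ?thesis by simp
qed

lemma ring_id1:
  fixes T S Z B H G Xx Y :: "'b::comm_ring_1"
  assumes h: "T*Xx = S^i*G + (S*T*Z - B)*H"
  shows "B*Xx + S^Suc i*Y = S^Suc i*(Z*G+Y) + (S*T*Z - B)*(Z*(S*H) - Xx)"
proof -
  have e: "(S*T*Z - B)*(Z*(S*H)) = Z*S*((S*T*Z-B)*H)" by (simp add: ac_simps)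
  have "(S*T*Z-B)*H = T*Xx - S^i*G" using h by (simp add: algebra_simps)
  hence "(S*T*Z - B)*(Z*(S*H)) = Z*S*(T*Xx - S^i*G)" using e by simp
  thus ?thesis by (simp add: algebra_simps)
qed

lemma step_fwd:
  fixes a b s t :: "'a::idom"
  assumes "a = s * t"
    and "[:t * x:] = smult (s^i) G + [:-b,a:] * H"
  shows "[:b * x + s ^ Suc i * y:] = smult (s ^ Suc i) ([:0,1:] * G + [:y:]) + [:-b,a:] * ([:0,1:] * smult s H - [:x:])"
proof -
  have h: "[:t:] * [:x:] = [:s:]^i * G + ([:s:] * [:t:] * [:0,1:] - [:b:]) * H"
    using assms(2) unfolding smult_as const_pow const_mult Q_eq assms(1) by simp
  show ?thesis unfolding Q_eq unfolding smult_as const_add const_mult const_pow assms(1)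
    by (rule ring_id1[OF h])
qed


lemma ring_id2:
  fixes SS A B X g0 g1 h0 h1 :: "'b::comm_ring_1"
  shows "SS*(g0 + X*g1) + (A*X - B)*(h0 + X*h1) = (SS*g0 - B*h0) + X*(SS*g1 + A*h0 + (A*X - B)*h1)"
  by (simp add: algebra_simps)

lemma step_bwd:
  fixes a b s t c :: "'a::idom"
  assumes ast: "a = s * t" and a0: "a \<noteq> 0" and rp: "rel_prime a b" and b0: "b \<noteq> 0"
    and h: "[:c:] = smult (s ^ Suc i) G + [:-b,a:] * H"
  shows "\<exists>x y G' H'. c = b*x + s^Suc i * y \<and> [:t*x:] = smult (s^i) G' + [:-b,a:]*H'"
proof -
  obtain G0 G1 where G: "G = pCons G0 G1" by (rule pCons_cases)
  obtain H0 H1 where H: "H = pCons H0 H1" by (rule pCons_cases)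
  have "[:c:] = [:s ^ Suc i:] * ([:G0:] + [:0,1:] * G1) + ([:a:] * [:0,1:] - [:b:]) * ([:H0:] + [:0,1:] * H1)"
  proof -
    have "G = [:G0:] + [:0,1:] * G1" "H = [:H0:] + [:0,1:] * H1" using G H pCons_X by auto
    thus ?thesis using h unfolding Q_eq smult_as by simp
  qed
  also have "\<dots> = ([:s ^ Suc i:] * [:G0:] - [:b:] * [:H0:]) + [:0,1:] * ([:s ^ Suc i:] * G1 + [:a:] * [:H0:] + ([:a:] * [:0,1:] - [:b:]) * H1)"
    by (rule ring_id2)
  finally have "[:c:] - ([:s ^ Suc i:] * [:G0:] - [:b:] * [:H0:]) = [:0,1:] * ([:s ^ Suc i:] * G1 + [:a:] * [:H0:] + ([:a:] * [:0,1:] - [:b:]) * H1)"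
    by simp
  moreover have "[:c - (s ^ Suc i * G0 - b * H0):] = [:c:] - ([:s ^ Suc i:] * [:G0:] - [:b:] * [:H0:])" by simp
  moreover have "[:s ^ Suc i:] * G1 + [:a:] * [:H0:] + ([:a:] * [:0,1:] - [:b:]) * H1 = smult (s ^ Suc i) G1 + [:a * H0:] + [:-b,a:] * H1"
    by (simp only: Q_eq smult_as const_mult)
  ultimately have "[:c - (s ^ Suc i * G0 - b * H0):] = [:0,1:] * (smult (s ^ Suc i) G1 + [:a * H0:] + [:-b,a:] * H1)"
    by simp
  from const_eq_X[OF this] have c: "c = s ^ Suc i * G0 - b * H0"
    and z: "smult (s ^ Suc i) G1 + [:a * H0:] + [:-b,a:] * H1 = 0" by auto
  have "smult s (smult (s^i) G1 + [:t * H0:]) = [:-b,a:] * (- H1)"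
  proof -
    have "smult s (smult (s^i) G1 + [:t*H0:]) = smult (s^Suc i) G1 + [:a*H0:]" by (simp add: ast smult_add_right mult.assoc)
    also have "\<dots> = - ([:-b,a:] * H1)" using z by (simp only: eq_neg_iff_add_eq_0)
    finally show ?thesis by simp
  qed
  moreover have "s dvd a" using ast by simp
  moreover have "\<And>x. s dvd b * x \<Longrightarrow> s dvd x" using cop_s[OF rp b0 ast a0] by blast
  ultimately obtain R where R: "- H1 = smult s R" using div_lemma by metis
  have "smult s (smult (s^i) G1 + [:t * H0:]) = smult s ([:-b,a:] * R)"
    using \<open>smult s _ = _\<close> R by simp
  hence e: "smult (s^i) G1 + [:t * H0:] = [:-b,a:] * R"
    using smult_cancel a0 ast by fastforce
  show ?thesis
  proof (intro exI conjI)
    show "c = b * (- H0) + s ^ Suc i * G0" using c by simp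
    show "[:t * (- H0):] = smult (s^i) G1 + [:-b,a:] * (- R)"
    proof -
      have "[:t * (- H0):] = - [:t * H0:]" by simp
      also have "\<dots> = smult (s^i) G1 - [:-b,a:] * R"
      proof -
        have "[:t*H0:] = [:-b,a:] * R - smult (s^i) G1" using e by (metis add_diff_cancel_left')
        thus ?thesis by (metis minus_diff_eq)
      qed
      finally show ?thesis by simp
    qed
  qed
qed


lemma V_eq:
  fixes a b s t :: "'a::idom"
  assumes ast: "a = s * t" and a0: "a \<noteq> 0" and rp: "rel_prime a b" and b0: "b \<noteq> 0"
  shows "[:c:] \<in> pow_plus_ideal s i (lin_ideal a b) \<longleftrightarrow> c \<in> Wseq b s t i"
proof (induction i arbitrary: c)
  case 0
  have "[:c:] = smult (s^0) [:c:] + [:-b,a:] * 0" by simp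
  then show ?case unfolding mem_ppi by (simp only: Wseq.simps UNIV_I iffI) blast
next
  case (Suc i)
  show ?case
  proof
    assume "[:c:] \<in> pow_plus_ideal s (Suc i) (lin_ideal a b)"
    then obtain G H where "[:c:] = smult (s ^ Suc i) G + [:-b,a:] * H" unfolding mem_ppi by blast
    from step_bwd[OF ast a0 rp b0 this] obtain x y G' H' where
      "c = b*x + s^Suc i * y" "[:t*x:] = smult (s^i) G' + [:-b,a:]*H'" by blast
    moreover have "t * x \<in> Wseq b s t i" using Suc.IH calculation(2) unfolding mem_ppi by blast
    ultimately show "c \<in> Wseq b s t (Suc i)" by (auto simp: colon_def)
  next
    assume "c \<in> Wseq b s t (Suc i)"
    then obtain x y where c: "c = b*x + s^Suc i * y" and "t * x \<in> Wseq b s t i" by (auto simp: colon_def)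
    then obtain G H where "[:t*x:] = smult (s^i) G + [:-b,a:]*H" using Suc.IH unfolding mem_ppi by blast
    from step_fwd[OF ast this, of y] show "[:c:] \<in> pow_plus_ideal s (Suc i) (lin_ideal a b)"
      unfolding mem_ppi c by blast
  qed
qed

lemma ring_id3:
  fixes A Am B X Fr C Q h f0 :: "'b::comm_ring_1"
  assumes "Am*Fr = C + Q*h" "Q = A*X - B"
  shows "A*Am*(f0 + X*Fr) = (A*Am*f0 + B*C) + Q*(Am*Fr + B*h)"
proof -
  have "A*Am*(f0 + X*Fr) = A*Am*f0 + (Q + B)*(Am*Fr)" using assms(2) by (simp add: algebra_simps)
  also have "\<dots> = A*Am*f0 + (Q + B)*(C + Q*h)" using assms(1) by simp
  also have "\<dots> = (A*Am*f0 + B*C) + Q*((C + Q*h) + B*h)" by (simp add: algebra_simps)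
  finally show ?thesis using assms(1) by simp
qed

lemma reduce:
  fixes a b :: "'a::comm_ring_1"
  shows "\<exists>m c h. smult (a^m) F = [:c:] + [:-b,a:] * h"
proof (induction F rule: pCons_induct)
  case 0 show ?case by (intro exI[of _ 0]) auto
next
  case (pCons f0 Fr)
  then obtain m c h where e: "smult (a^m) Fr = [:c:] + [:-b,a:] * h" by blast
  have e': "[:a^m:] * Fr = [:c:] + [:-b,a:] * h" using e by (simp only: smult_as)
  have "[:a:] * [:a^m:] * ([:f0:] + [:0,1:] * Fr) = ([:a:]*[:a^m:]*[:f0:] + [:b:]*[:c:]) + [:-b,a:]*([:a^m:]*Fr + [:b:]*h)"
    by (rule ring_id3[OF e' Q_eq])
  hence "smult (a^Suc m) (pCons f0 Fr) = [:a^Suc m * f0 + b*c:] + [:-b,a:]*(smult (a^m) Fr + smult b h)"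
    using pCons_X[of f0 Fr] by (simp only: smult_as const_mult const_add power_Suc)
  then show ?case by blast
qed

lemma cancel_pow:
  fixes a b :: "'a::idom"
  assumes a0: "a \<noteq> 0" and rp: "rel_prime a b" and b0: "b \<noteq> 0"
  shows "smult (a^m) F = [:-b,a:] * h \<Longrightarrow> \<exists>k. F = [:-b,a:] * k"
proof (induction m arbitrary: F h)
  case 0 then show ?case by auto
next
  case (Suc m)
  have e: "smult a (smult (a^m) F) = [:-b,a:] * h" using Suc.prems by simp
  have "\<And>x. a dvd b * x \<Longrightarrow> a dvd x" using cop_a[OF rp b0] by blast
  then obtain h' where h': "h = smult a h'" using div_lemma[OF dvd_refl _ e] by blast
  have "smult a (smult (a^m) F) = smult a ([:-b,a:] * h')" using e h' by simp
  hence "smult (a^m) F = [:-b,a:] * h'" using smult_cancel a0 by blast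
  then show ?case using Suc.IH by blast
qed


lemma ring_id4:
  fixes x A Q B C h :: "'b::comm_ring_1"
  shows "x = A + Q*B \<Longrightarrow> x = C + Q*h \<Longrightarrow> C = A + Q*(B - h)"
  by (simp add: algebra_simps)

lemma const_in_I:
  fixes a b :: "'a::idom"
  assumes a0: "a \<noteq> 0" and "[:c:] = [:-b,a:] * f" shows "c = 0"
proof (cases "f = 0")
  case True then show ?thesis using assms by simp
next
  case False
  have "[:-b,a:] \<noteq> 0" using a0 by simp
  hence "degree ([:-b,a:] * f) = degree [:-b,a:] + degree f" using degree_mult_eq False by blast
  moreover have "degree [:-b,a:] = 1" using a0 by simp
  ultimately have "degree [:c:] \<ge> 1" using assms(2) by simp
  then show ?thesis by simp
qed

theorem lemma3p3:
  fixes a b s t :: "'a::idom"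
  assumes "a \<noteq> 0" and "b \<noteq> 0" and "rel_prime a b"
    and "rel_prime s t" and "a = s * t"
  shows "((\<Inter>i. pow_plus_ideal s i (lin_ideal a b)) = lin_ideal a b
           \<longleftrightarrow> {c. [:c:] \<in> (\<Inter>i. pow_plus_ideal s i (lin_ideal a b))} = {0})
         \<and> {c. [:c:] \<in> (\<Inter>i. pow_plus_ideal s i (lin_ideal a b))} = Wbst b s t"
proof -
  note a0 = assms(1) and b0 = assms(2) and rp = assms(3) and ast = assms(5)
  define M where "M = (\<Inter>i. pow_plus_ideal s i (lin_ideal a b))"
  have W: "{c. [:c:] \<in> M} = Wbst b s t"
    unfolding M_def Wbst_def using V_eq[OF ast a0 rp b0] by auto
  have IM: "lin_ideal a b \<subseteq> M"
  proof
    fix p assume "p \<in> lin_ideal a b"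
    then obtain f where "p = [:-b,a:] * f" unfolding lin_ideal_def by blast
    hence "\<And>i. p = smult (s^i) 0 + [:-b,a:] * f" by simp
    hence "p \<in> pow_plus_ideal s i (lin_ideal a b)" for i unfolding mem_ppi by blast
    thus "p \<in> M" unfolding M_def by blast
  qed
  have eq: "M = lin_ideal a b \<longleftrightarrow> {c. [:c:] \<in> M} = {0}"
  proof
    assume "M = lin_ideal a b"
    moreover have "[:c:] \<in> lin_ideal a b \<longleftrightarrow> c = 0" for c
    proof
      assume "[:c:] \<in> lin_ideal a b"
      then obtain f where "[:c:] = [:-b,a:] * f" unfolding lin_ideal_def by blast
      thus "c = 0" using const_in_I[OF a0] by blast
    next
      assume "c = 0"
      hence "[:c:] = [:-b,a:] * 0" by simp
      thus "[:c:] \<in> lin_ideal a b" unfolding lin_ideal_def by blast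
    qed
    ultimately show "{c. [:c:] \<in> M} = {0}" by auto
  next
    assume V0: "{c. [:c:] \<in> M} = {0}"
    have "M \<subseteq> lin_ideal a b"
    proof
      fix F assume F: "F \<in> M"
      obtain m c h where e: "smult (a^m) F = [:c:] + [:-b,a:] * h" using reduce by blast
      have "[:c:] \<in> pow_plus_ideal s i (lin_ideal a b)" for i
      proof -
        have "F \<in> pow_plus_ideal s i (lin_ideal a b)" using F unfolding M_def by blast
        then obtain g f where "F = smult (s^i) g + [:-b,a:] * f" unfolding mem_ppi by blast
        hence "smult (a^m) F = smult (s^i) (smult (a^m) g) + [:-b,a:] * smult (a^m) f"
          by (metis smult_add_right smult_smult mult.commute mult_smult_right)
        hence "[:c:] = smult (s^i) (smult (a^m) g) + [:-b,a:] * (smult (a^m) f - h)"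
          using ring_id4 e by metis
        thus ?thesis unfolding mem_ppi by blast
      qed
      hence "c \<in> {c. [:c:] \<in> M}" unfolding M_def by blast
      hence "c = 0" using V0 by blast
      hence "smult (a^m) F = [:-b,a:] * h" using e by simp
      then obtain k where "F = [:-b,a:] * k" using cancel_pow[OF a0 rp b0] by blast
      thus "F \<in> lin_ideal a b" unfolding lin_ideal_def by blast
    qed
    thus "M = lin_ideal a b" using IM by blast
  qed
  show ?thesis using eq W unfolding M_def by blast
qed

end
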